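(* Fix $\upsilon\in(0,1]$ and let $\rho(\upsilon)=\lim_{p\to\infty,\ p\text{ prime}}\rho(\upsilon,p)$ (this limit exists). For each $N\ge 2$ let $\rho_2(\upsilon,N)=\min\{\Lambda_3(S): S\subseteq\mathbb{Z}_N,\ |S|\ge \upsilon N\}$. Then $\lim_{p\to\infty,\ p\text{ prime}}\rho_2(\upsilon,p)=\rho(\upsilon)$.
   Context: For an integer $N\ge 2$ and $f:\mathbb{Z}_N\to\mathbb{C}$, define $\mathbb{E}(f)=\frac1N\sum_{n\in\mathbb{Z}_N} f(n)$ and $\Lambda_3(f)=\frac{1}{N^2}\sum_{n,d\in\mathbb{Z}_N} f(n)f(n+d)f(n+2d)$. A set $S\subseteq\mathbb{Z}_N$ is identified with its indicator function, so $\Lambda_3(S)$ is $N^{-2}$ times the number of pairs $(n,d)\in\mathbb{Z}_N^2$ with $n,n+d,n+2d\in S$. For $\upsilon\in(0,1]$, $\rho(\upsilon,N)=\min\{\Lambda_3(f): f:\mathbb{Z}_N\to[0,1],\ \mathbb{E}(f)\ge\upsilon\}$. *)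

theory Defs
  imports "HOL-Analysis.Analysis" "HOL-Computational_Algebra.Primes"
begin

text \<open>Z_N is represented by {0..<N}, with arithmetic mod N. Functions are
  nat \<Rightarrow> real; only their values on {0..<N} matter.\<close>

definition EE :: "nat \<Rightarrow> (nat \<Rightarrow> real) \<Rightarrow> real" where
  "EE N f = (1 / real N) * (\<Sum>n<N. f n)"

definition Lambda3 :: "nat \<Rightarrow> (nat \<Rightarrow> real) \<Rightarrow> real" where
  "Lambda3 N f = (1 / (real N)^2) *
     (\<Sum>n<N. \<Sum>d<N. f n * f ((n + d) mod N) * f ((n + 2 * d) mod N))"

text \<open>rho(v,N): minimum of Lambda3 over f : Z_N \<rightarrow> [0,1] with E f \<ge> v
  (the minimum is attained by compactness, so it equals the infimum).\<close>
definition rho :: "real \<Rightarrow> nat \<Rightarrow> real" where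
  "rho v N = Inf {Lambda3 N f | f. (\<forall>n<N. 0 \<le> f n \<and> f n \<le> 1) \<and> EE N f \<ge> v}"

definition rho2 :: "real \<Rightarrow> nat \<Rightarrow> real" where
  "rho2 v N = Min {Lambda3 N (indicator S) | S. S \<subseteq> {..<N} \<and> real (card S) \<ge> v * real N}"

end

theory Submission
  imports Defs
begin

lemma cubic_id:
  fixes x y z a b c t1 t2 :: real
  assumes "a*b*c = 0"
  shows "t2*((x+t1*a)*(y+t1*b)*(z+t1*c)) - t1*((x+t2*a)*(y+t2*b)*(z+t2*c)) - (t2-t1)*(x*y*z)
     = (x*b*c + y*a*c + z*a*b)*(t1*t2*(t1-t2))"
proof -
  have "t2*((x+t1*a)*(y+t1*b)*(z+t1*c)) - t1*((x+t2*a)*(y+t2*b)*(z+t2*c)) - (t2-t1)*(x*y*z)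
     = (x*b*c + y*a*c + z*a*b)*(t1*t2*(t1-t2)) + (a*b*c)*(t1*t2*(t1*t1-t2*t2))"
    by (simp add: algebra_simps)
  then show ?thesis using assms by simp
qed

lemma term_concave:
  fixes f :: "nat \<Rightarrow> real"
  assumes "a\<noteq>b" "a\<noteq>c" "b\<noteq>c" "i\<noteq>j" "0\<le>f a" "0\<le>f b" "0\<le>f c" "t1 \<le> 0" "0 \<le> t2"
  and dl: "dl = (\<lambda>k. (if k=i then 1 else 0) - (if k=j then 1 else 0))"
  shows "t2*((f a+t1*dl a)*(f b+t1*dl b)*(f c+t1*dl c)) - t1*((f a+t2*dl a)*(f b+t2*dl b)*(f c+t2*dl c))
    \<le> (t2-t1)*(f a*f b*f c)"
proof -
  have D: "dl a*dl b*dl c = 0" using assms(1-4) unfolding dl by auto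
  have P: "dl a*dl b \<le> 0" "dl a*dl c \<le> 0" "dl b*dl c \<le> 0" using assms(1-4) unfolding dl by auto
  have C: "f a*dl b*dl c + f b*dl a*dl c + f c*dl a*dl b \<le> 0"
  proof -
    have "f a*(dl b*dl c) \<le> 0" "f b*(dl a*dl c) \<le> 0" "f c*(dl a*dl b) \<le> 0"
      using P assms(5-7) by (auto intro: mult_nonneg_nonpos)
    then show ?thesis by (simp add: mult.assoc)
  qed
  have T: "t1*t2*(t1-t2) \<ge> 0"
  proof -
    have "t1*t2 \<le> 0" using assms(8,9) by (simp add: mult_nonpos_nonneg)
    moreover have "t1 - t2 \<le> 0" using assms(8,9) by simp
    ultimately show ?thesis by (simp add: mult_nonpos_nonpos)
  qed
  have "(f a*dl b*dl c + f b*dl a*dl c + f c*dl a*dl b)*(t1*t2*(t1-t2)) \<le> 0"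
    using C T by (simp add: mult_nonpos_nonneg)
  with cubic_id[OF D, of t2 "f a" t1 "f b" "f c"] show ?thesis by linarith
qed

lemma distinct_idx:
  fixes N n d :: nat
  assumes "prime N" "N > 2" "n < N" "0 < d" "d < N"
  shows "n \<noteq> (n+d) mod N" "n \<noteq> (n+2*d) mod N" "(n+d) mod N \<noteq> (n+2*d) mod N"
proof -
  have nd: "\<not> N dvd d" using assms by (simp add: nat_dvd_not_less)
  have n2d: "\<not> N dvd 2*d"
  proof
    assume "N dvd 2*d"
    then have "N dvd 2 \<or> N dvd d" using assms(1) prime_dvd_mult_nat by blast
    then show False using nd assms(2) by (auto dest: dvd_imp_le)
  qed
  show "n \<noteq> (n+d) mod N"
  proof
    assume "n = (n+d) mod N"
    then have "n mod N = (n+d) mod N" using assms(3) by simp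
    then have "N dvd (n+d) - n" using mod_eq_dvd_iff_nat[of n "n+d" N] by simp
    then show False using nd by simp
  qed
  show "n \<noteq> (n+2*d) mod N"
  proof
    assume "n = (n+2*d) mod N"
    then have "n mod N = (n+2*d) mod N" using assms(3) by simp
    then have "N dvd (n+2*d) - n" using mod_eq_dvd_iff_nat[of n "n+2*d" N] by simp
    then show False using n2d by simp
  qed
  show "(n+d) mod N \<noteq> (n+2*d) mod N"
  proof
    assume "(n+d) mod N = (n+2*d) mod N"
    then have "N dvd (n+2*d) - (n+d)" using mod_eq_dvd_iff_nat[of "n+d" "n+2*d" N] by simp
    then show False using nd by simp
  qed
qed

definition Fd :: "nat \<Rightarrow> (nat \<Rightarrow> real) \<Rightarrow> real" where
  "Fd N f = (\<Sum>n<N. \<Sum>d\<in>{1..<N}. f n * f ((n+d) mod N) * f ((n+2*d) mod N))"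

definition fracs :: "nat \<Rightarrow> (nat \<Rightarrow> real) \<Rightarrow> nat set" where
  "fracs N f = {k. k<N \<and> 0 < f k \<and> f k < 1}"

definition inbox :: "nat \<Rightarrow> (nat \<Rightarrow> real) \<Rightarrow> bool" where
  "inbox N f \<longleftrightarrow> (\<forall>k<N. 0 \<le> f k \<and> f k \<le> 1)"

lemma Fd_line:
  fixes f :: "nat \<Rightarrow> real"
  assumes "prime N" "N > 2" "i \<noteq> j" "inbox N f" "t1 \<le> 0" "0 \<le> t2"
  and dl: "dl = (\<lambda>k. (if k=i then 1 else 0) - (if k=j then 1 else 0))"
  shows "t2 * Fd N (\<lambda>k. f k + t1*dl k) - t1 * Fd N (\<lambda>k. f k + t2*dl k) \<le> (t2-t1)*Fd N f"
proof -
  have "t2 * Fd N (\<lambda>k. f k + t1*dl k) - t1 * Fd N (\<lambda>k. f k + t2*dl k) =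
    (\<Sum>n<N. \<Sum>d\<in>{1..<N}. t2*((f n + t1*dl n) * (f ((n+d) mod N) + t1*dl ((n+d) mod N)) * (f ((n+2*d) mod N) + t1*dl ((n+2*d) mod N)))
       - t1*((f n + t2*dl n) * (f ((n+d) mod N) + t2*dl ((n+d) mod N)) * (f ((n+2*d) mod N) + t2*dl ((n+2*d) mod N))))"
    by (simp add: Fd_def sum_distrib_left sum_subtractf)
  also have "\<dots> \<le> (\<Sum>n<N. \<Sum>d\<in>{1..<N}. (t2-t1)*(f n * f ((n+d) mod N) * f ((n+2*d) mod N)))"
  proof (intro sum_mono)
    fix n d assume n: "n \<in> {..<N}" and d: "d \<in> {1..<N}"
    have N0: "N > 0" using assms(2) by simp
    have ds: "n \<noteq> (n+d) mod N" "n \<noteq> (n+2*d) mod N" "(n+d) mod N \<noteq> (n+2*d) mod N"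
      using distinct_idx[OF assms(1,2), of n d] n d by auto
    have "0 \<le> f n" "0 \<le> f ((n+d) mod N)" "0 \<le> f ((n+2*d) mod N)"
      using assms(4) n N0 unfolding inbox_def by auto
    from term_concave[OF ds assms(3) this assms(5,6) dl]
    show "t2*((f n + t1*dl n) * (f ((n+d) mod N) + t1*dl ((n+d) mod N)) * (f ((n+2*d) mod N) + t1*dl ((n+2*d) mod N)))
       - t1*((f n + t2*dl n) * (f ((n+d) mod N) + t2*dl ((n+d) mod N)) * (f ((n+2*d) mod N) + t2*dl ((n+2*d) mod N)))
       \<le> (t2-t1)*(f n * f ((n+d) mod N) * f ((n+2*d) mod N))" .
  qed
  also have "\<dots> = (t2-t1)*Fd N f" by (simp add: Fd_def sum_distrib_left)
  finally show ?thesis .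
qed

lemma pipage_step:
  fixes f :: "nat \<Rightarrow> real"
  assumes "prime N" "N > 2" "inbox N f" "i \<in> fracs N f" "j \<in> fracs N f" "i \<noteq> j"
  shows "\<exists>g. inbox N g \<and> (\<Sum>k<N. g k) = (\<Sum>k<N. f k) \<and> Fd N g \<le> Fd N f \<and> fracs N g \<subset> fracs N f"
proof -
  define dl where "dl = (\<lambda>k::nat. (if k=i then 1 else 0) - (if k=j then (1::real) else 0))"
  have fi: "i < N" "0 < f i" "f i < 1" and fj: "j < N" "0 < f j" "f j < 1"
    using assms(4,5) unfolding fracs_def by auto
  define t1 where "t1 = - min (f i) (1 - f j)"
  define t2 where "t2 = min (1 - f i) (f j)"
  have t1: "t1 < 0" and t2: "0 < t2" using fi fj unfolding t1_def t2_def by auto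
  have line: "inbox N (\<lambda>k. f k + t*dl k) \<and> (\<Sum>k<N. f k + t*dl k) = (\<Sum>k<N. f k)
     \<and> fracs N (\<lambda>k. f k + t*dl k) \<subset> fracs N f" if "t = t1 \<or> t = t2" for t
  proof (intro conjI)
    have tb: "- min (f i) (1 - f j) \<le> t" "t \<le> min (1 - f i) (f j)"
      using that t1 t2 unfolding t1_def t2_def by auto
    show "inbox N (\<lambda>k. f k + t*dl k)" using assms(3) tb assms(6) unfolding inbox_def dl_def by auto
    have "(\<Sum>k<N. dl k) = 0" using fi fj unfolding dl_def by (simp add: sum_subtractf)
    then show "(\<Sum>k<N. f k + t*dl k) = (\<Sum>k<N. f k)"
      by (simp add: sum.distrib sum_distrib_left[symmetric])
    have sub: "fracs N (\<lambda>k. f k + t*dl k) \<subseteq> fracs N f \<union> {i,j}"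
      unfolding fracs_def dl_def by auto
    have "i \<notin> fracs N (\<lambda>k. f k + t*dl k) \<or> j \<notin> fracs N (\<lambda>k. f k + t*dl k)"
      using that assms(6) unfolding fracs_def dl_def t1_def t2_def by (auto simp: min_def split: if_splits)
    then show "fracs N (\<lambda>k. f k + t*dl k) \<subset> fracs N f"
      using sub assms(4,5) by blast
  qed
  have conc: "t2 * Fd N (\<lambda>k. f k + t1*dl k) - t1 * Fd N (\<lambda>k. f k + t2*dl k) \<le> (t2-t1)*Fd N f"
    using Fd_line[OF assms(1,2,6,3), of t1 t2 dl] t1 t2 dl_def by simp
  have "Fd N (\<lambda>k. f k + t1*dl k) \<le> Fd N f \<or> Fd N (\<lambda>k. f k + t2*dl k) \<le> Fd N f"
  proof (rule ccontr)
    assume "\<not> ?thesis"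
    then have "t2 * Fd N f < t2 * Fd N (\<lambda>k. f k + t1*dl k)" "(-t1) * Fd N f < (-t1) * Fd N (\<lambda>k. f k + t2*dl k)"
      using t1 t2 by auto
    with conc show False by (simp add: algebra_simps)
  qed
  then show ?thesis using line by blast
qed

lemma pipage:
  fixes f :: "nat \<Rightarrow> real"
  assumes "prime N" "N > 2"
  shows "inbox N f \<Longrightarrow> \<exists>g. inbox N g \<and> (\<Sum>k<N. g k) = (\<Sum>k<N. f k) \<and> Fd N g \<le> Fd N f \<and> card (fracs N g) \<le> 1"
proof (induction "card (fracs N f)" arbitrary: f rule: less_induct)
  case less
  have fin: "finite (fracs N h)" for h unfolding fracs_def by auto
  show ?case
  proof (cases "card (fracs N f) \<le> 1")
    case True
    then show ?thesis using less.prems by blast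
  next
    case False
    then obtain i j where ij: "i \<in> fracs N f" "j \<in> fracs N f" "i \<noteq> j"
      using card_le_Suc0_iff_eq[OF fin] by auto
    from pipage_step[OF assms less.prems ij] obtain g where
      g: "inbox N g" "(\<Sum>k<N. g k) = (\<Sum>k<N. f k)" "Fd N g \<le> Fd N f" "fracs N g \<subset> fracs N f" by blast
    have "card (fracs N g) < card (fracs N f)" using psubset_card_mono[OF fin g(4)] .
    from less.hyps[OF this g(1)] obtain h where
      "inbox N h" "(\<Sum>k<N. h k) = (\<Sum>k<N. g k)" "Fd N h \<le> Fd N g" "card (fracs N h) \<le> 1" by blast
    then show ?thesis using g by (metis order_trans)
  qed
qed

lemma Lambda3_split:
  assumes "N > 0"
  shows "Lambda3 N f = (1/(real N)^2) * ((\<Sum>n<N. f n ^ 3) + Fd N f)"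
proof -
  have U: "{..<N} = insert 0 {1..<N}" using assms by auto
  have "(\<Sum>n<N. \<Sum>d<N. f n * f ((n + d) mod N) * f ((n + 2 * d) mod N))
     = (\<Sum>n<N. f n ^ 3 + (\<Sum>d\<in>{1..<N}. f n * f ((n + d) mod N) * f ((n + 2 * d) mod N)))"
  proof (rule sum.cong[OF refl])
    fix n assume "n \<in> {..<N}"
    then show "(\<Sum>d<N. f n * f ((n + d) mod N) * f ((n + 2 * d) mod N)) =
         f n ^ 3 + (\<Sum>d\<in>{1..<N}. f n * f ((n + d) mod N) * f ((n + 2 * d) mod N))"
      by (subst U, subst sum.insert) (auto simp: power3_eq_cube)
  qed
  then show ?thesis unfolding Lambda3_def Fd_def by (simp add: sum.distrib)
qed

lemma cube_sum_bounds:
  assumes "inbox N f"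
  shows "0 \<le> (\<Sum>n<N. f n ^ 3)" "(\<Sum>n<N. f n ^ 3) \<le> real N"
proof -
  show "0 \<le> (\<Sum>n<N. f n ^ 3)" using assms unfolding inbox_def by (intro sum_nonneg) auto
  have "(\<Sum>n<N. f n ^ 3) \<le> (\<Sum>n<N. 1)"
    using assms unfolding inbox_def by (intro sum_mono) (auto intro: power_le_one)
  then show "(\<Sum>n<N. f n ^ 3) \<le> real N" by simp
qed

lemma shift_count:
  fixes N c k0 :: nat
  shows "(\<Sum>n<N. (if (n + c) mod N = k0 then 1 else 0 :: real)) \<le> 1"
proof -
  have "(\<Sum>n<N. (if (n + c) mod N = k0 then 1 else 0 :: real)) = real (card {n\<in>{..<N}. (n + c) mod N = k0})"
    by (simp add: sum.If_cases lessThan_def Collect_conj_eq)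
  moreover have "card {n\<in>{..<N}. (n + c) mod N = k0} \<le> Suc 0"
  proof (subst card_le_Suc0_iff_eq, simp, intro ballI)
    fix a1 a2 assume a1: "a1 \<in> {n\<in>{..<N}. (n + c) mod N = k0}" and a2: "a2 \<in> {n\<in>{..<N}. (n + c) mod N = k0}"
    have gen: "x = y" if "x \<le> y" "y < N" "(x + c) mod N = (y + c) mod N" for x y :: nat
    proof -
      have "N dvd (y + c) - (x + c)" using mod_eq_dvd_iff_nat[of "x+c" "y+c" N] that by simp
      then have "N dvd y - x" by simp
      moreover have "y - x < N" using that by simp
      ultimately have "y - x = 0" using nat_dvd_not_less by (metis gr0I)
      then show "x = y" using that by simp
    qed
    show "a1 = a2" using a1 a2 gen[of a1 a2] gen[of a2 a1] by (cases "a1 \<le> a2") auto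
  qed
  ultimately show ?thesis by simp
qed

lemma rounding:
  fixes f :: "nat \<Rightarrow> real"
  assumes "prime N" "N > 2" "inbox N f"
  shows "\<exists>S. S \<subseteq> {..<N} \<and> (\<Sum>k<N. f k) \<le> real (card S) \<and> Lambda3 N (indicator S) \<le> Lambda3 N f + 4 / real N"
proof -
  have N0: "N > 0" using assms(2) by simp
  obtain g where g: "inbox N g" "(\<Sum>k<N. g k) = (\<Sum>k<N. f k)" "Fd N g \<le> Fd N f" "card (fracs N g) \<le> 1"
    using pipage[OF assms(1,2,3)] by blast
  have fin: "finite (fracs N g)" unfolding fracs_def by auto
  obtain k0 where k0: "k0 < N" "\<forall>k<N. k \<noteq> k0 \<longrightarrow> g k = 0 \<or> g k = 1"
  proof (cases "fracs N g = {}")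
    case True
    then show ?thesis using that[of 0] N0 g(1) unfolding fracs_def inbox_def by force
  next
    case False
    then obtain k0 where "k0 \<in> fracs N g" by auto
    then have "fracs N g = {k0}" using g(4) card_le_Suc0_iff_eq[OF fin] by auto
    then show ?thesis using that[of k0] g(1) unfolding fracs_def inbox_def by force
  qed
  define S where "S = {k. k < N \<and> 0 < g k}"
  define h where "h = (indicator S :: nat \<Rightarrow> real)"
  have S: "S \<subseteq> {..<N}" unfolding S_def by auto
  have hg_eq: "h k = g k" if "k < N" "k \<noteq> k0" for k
    using k0(2) that unfolding h_def S_def by (auto simp: indicator_def)
  have hg_le: "g k \<le> h k" if "k < N" for k
    using g(1) that unfolding h_def S_def inbox_def by (auto simp: indicator_def)
  have h01: "0 \<le> h k" "h k \<le> 1" for k unfolding h_def by (auto simp: indicator_def)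
  have "(\<Sum>k<N. g k) \<le> (\<Sum>k<N. h k)" using hg_le by (intro sum_mono) auto
  also have "(\<Sum>k<N. h k) = real (card S)"
    unfolding h_def indicator_def using S by (simp add: sum.If_cases Int_absorb1)
  finally have card: "(\<Sum>k<N. f k) \<le> real (card S)" using g(2) by simp
  define I where "I = (\<lambda>x::nat. if x = k0 then 1 else 0 :: real)"
  have trm: "h a * h b * h c - g a * g b * g c \<le> I a + I b + I c" if "a < N" "b < N" "c < N" for a b c
  proof (cases "a = k0 \<or> b = k0 \<or> c = k0")
    case True
    have "h a * h b * h c \<le> 1" using h01 by (simp add: mult_le_one)
    moreover have "0 \<le> g a * g b * g c" using g(1) that unfolding inbox_def by simp
    moreover have "1 \<le> I a + I b + I c" using True unfolding I_def by auto
    ultimately show ?thesis by linarith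
  next
    case False
    then show ?thesis using hg_eq that unfolding I_def by auto
  qed
  have "(\<Sum>n<N. \<Sum>d<N. h n * h ((n + d) mod N) * h ((n + 2 * d) mod N))
       - (\<Sum>n<N. \<Sum>d<N. g n * g ((n + d) mod N) * g ((n + 2 * d) mod N))
     = (\<Sum>n<N. \<Sum>d<N. h n * h ((n + d) mod N) * h ((n + 2 * d) mod N) - g n * g ((n + d) mod N) * g ((n + 2 * d) mod N))"
    by (simp add: sum_subtractf)
  also have "\<dots> \<le> (\<Sum>n<N. \<Sum>d<N. I n + I ((n + d) mod N) + I ((n + 2 * d) mod N))"
  proof (intro sum_mono)
    fix n d assume "n \<in> {..<N}" "d \<in> {..<N}"
    then show "h n * h ((n + d) mod N) * h ((n + 2 * d) mod N) - g n * g ((n + d) mod N) * g ((n + 2 * d) mod N)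
      \<le> I n + I ((n + d) mod N) + I ((n + 2 * d) mod N)" using N0 by (intro trm) auto
  qed
  also have "\<dots> = (\<Sum>n<N. \<Sum>d<N. I n) + (\<Sum>d<N. \<Sum>n<N. I ((n + d) mod N)) + (\<Sum>d<N. \<Sum>n<N. I ((n + 2 * d) mod N))"
  proof -
    have e1: "(\<Sum>n<N. \<Sum>d<N. I ((n + d) mod N)) = (\<Sum>d<N. \<Sum>n<N. I ((n + d) mod N))"
      by (rule sum.swap)
    have e2: "(\<Sum>n<N. \<Sum>d<N. I ((n + 2 * d) mod N)) = (\<Sum>d<N. \<Sum>n<N. I ((n + 2 * d) mod N))"
      by (rule sum.swap)
    show ?thesis by (simp only: sum.distrib e1 e2)
  qed
  also have "\<dots> \<le> real N + real N + real N"
  proof -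
    have "(\<Sum>n<N. \<Sum>d<N. I n) = real N" using k0(1) unfolding I_def by (simp add: mult.commute[of "real N"] if_distrib[of "\<lambda>x. x * real N"] cong: if_cong)
    moreover have "(\<Sum>d<N. \<Sum>n<N. I ((n + d) mod N)) \<le> (\<Sum>d<N. 1)"
      unfolding I_def by (intro sum_mono shift_count)
    moreover have "(\<Sum>d<N. \<Sum>n<N. I ((n + 2 * d) mod N)) \<le> (\<Sum>d<N. 1)"
      unfolding I_def by (intro sum_mono shift_count)
    ultimately show ?thesis by simp
  qed
  finally have diff: "(\<Sum>n<N. \<Sum>d<N. h n * h ((n + d) mod N) * h ((n + 2 * d) mod N))
       \<le> (\<Sum>n<N. \<Sum>d<N. g n * g ((n + d) mod N) * g ((n + 2 * d) mod N)) + 3 * real N" by simp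
  have NN: "(1 / (real N)^2) * (3 * real N) = 3 / real N" using N0 by (simp add: power2_eq_square)
  have L1: "Lambda3 N h \<le> Lambda3 N g + 3 / real N"
  proof -
    have "Lambda3 N h \<le> (1 / (real N)^2) * ((\<Sum>n<N. \<Sum>d<N. g n * g ((n + d) mod N) * g ((n + 2 * d) mod N)) + 3 * real N)"
      unfolding Lambda3_def using diff by (intro mult_left_mono) auto
    then show ?thesis unfolding Lambda3_def using NN by (simp add: distrib_left)
  qed
  have L2: "Lambda3 N g \<le> Lambda3 N f + 1 / real N"
  proof -
    have "(\<Sum>n<N. g n ^ 3) + Fd N g \<le> ((\<Sum>n<N. f n ^ 3) + Fd N f) + real N"
      using cube_sum_bounds[OF g(1)] cube_sum_bounds[OF assms(3)] g(3) by linarith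
    then have "(1/(real N)^2) * ((\<Sum>n<N. g n ^ 3) + Fd N g) \<le> (1/(real N)^2) * (((\<Sum>n<N. f n ^ 3) + Fd N f) + real N)"
      by (intro mult_left_mono) auto
    moreover have "(1/(real N)^2) * real N = 1 / real N" using N0 by (simp add: power2_eq_square)
    ultimately show ?thesis unfolding Lambda3_split[OF N0] by (simp add: distrib_left)
  qed
  show ?thesis using S card L1 L2 unfolding h_def by (intro exI[of _ S]) auto
qed

lemma Lambda3_nonneg:
  assumes "\<forall>n<N. 0 \<le> f n \<and> f n \<le> 1"
  shows "0 \<le> Lambda3 N f"
proof -
  have "N > 0 \<Longrightarrow> n < N \<Longrightarrow> 0 \<le> f n * f ((n + d) mod N) * f ((n + 2 * d) mod N)" for n d
    using assms by simp
  then show ?thesis unfolding Lambda3_def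
    by (intro mult_nonneg_nonneg[of "1 / (real N)^2"] sum_nonneg) auto
qed

lemma rho_bounds:
  assumes "prime N" "N > 2" "0 < v" "v \<le> 1"
  shows "rho v N \<le> rho2 v N \<and> rho2 v N \<le> rho v N + 4 / real N"
proof -
  have N0: "N > 0" using assms(2) by simp
  define R where "R = {Lambda3 N f | f. (\<forall>n<N. 0 \<le> f n \<and> f n \<le> 1) \<and> EE N f \<ge> v}"
  define R2 where "R2 = {Lambda3 N (indicator S) | S. S \<subseteq> {..<N} \<and> real (card S) \<ge> v * real N}"
  have rho_eq: "rho v N = Inf R" unfolding rho_def R_def ..
  have rho2_eq: "rho2 v N = Min R2" unfolding rho2_def R2_def ..
  have "Lambda3 N (\<lambda>_. 1) \<in> R" unfolding R_def EE_def using N0 assms(4) by auto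
  then have Rne: "R \<noteq> {}" by auto
  have Rbdd: "bdd_below R" unfolding R_def bdd_below_def using Lambda3_nonneg by blast
  have "R2 \<subseteq> (\<lambda>S. Lambda3 N (indicator S)) ` Pow {..<N}" unfolding R2_def by auto
  then have R2fin: "finite R2" by (rule finite_subset) auto
  have "Lambda3 N (indicator {..<N}) \<in> R2" unfolding R2_def using assms(4) N0 by auto
  then have R2ne: "R2 \<noteq> {}" by auto
  have ind_box: "\<forall>n<N. 0 \<le> (indicator S n :: real) \<and> indicator S n \<le> (1::real)" for S :: "nat set"
    by (auto simp: indicator_def)
  have sum_ind: "(\<Sum>k<N. (indicator S k :: real)) = real (card S)" if "S \<subseteq> {..<N}" for S
    unfolding indicator_def using that by (simp add: sum.If_cases Int_absorb1)
  have "Min R2 \<in> R2" using Min_in[OF R2fin R2ne] .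
  then obtain S where S: "S \<subseteq> {..<N}" "real (card S) \<ge> v * real N" "Min R2 = Lambda3 N (indicator S)"
    unfolding R2_def by auto
  have "EE N (indicator S) \<ge> v"
    unfolding EE_def sum_ind[OF S(1)] using S(2) N0 by (simp add: field_simps)
  then have "Min R2 \<in> R" unfolding R_def using S(3) ind_box by auto
  then have lower: "rho v N \<le> rho2 v N" unfolding rho_eq rho2_eq using Rbdd by (rule cInf_lower)
  have upper: "rho2 v N \<le> rho v N + 4 / real N"
  proof (rule ccontr)
    assume "\<not> ?thesis"
    then have "Inf R < rho2 v N - 4 / real N" unfolding rho_eq by simp
    then obtain x where "x \<in> R" "x < rho2 v N - 4 / real N" using cInf_less_iff[OF Rne Rbdd] by auto
    then obtain f where f: "\<forall>n<N. 0 \<le> f n \<and> f n \<le> 1" "EE N f \<ge> v" "x = Lambda3 N f"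
      and x: "x < rho2 v N - 4 / real N" unfolding R_def by auto
    have fb: "inbox N f" using f(1) unfolding inbox_def by auto
    obtain T where T: "T \<subseteq> {..<N}" "(\<Sum>k<N. f k) \<le> real (card T)"
      "Lambda3 N (indicator T) \<le> Lambda3 N f + 4 / real N"
      using rounding[OF assms(1,2) fb] by blast
    have "v * real N \<le> (\<Sum>k<N. f k)" using f(2) N0 unfolding EE_def by (simp add: field_simps)
    then have "Lambda3 N (indicator T) \<in> R2" unfolding R2_def using T by auto
    then have "rho2 v N \<le> Lambda3 N (indicator T)" unfolding rho2_eq using R2fin by (rule Min_le[rotated])
    then show False using T(3) f(3) x by linarith
  qed
  show ?thesis using lower upper by simp
qed

theorem mainTheorem2:
  fixes v L :: real
  assumes "0 < v" and "v \<le> 1"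
    and "((\<lambda>p. rho v p) \<longlongrightarrow> L) (inf sequentially (principal {p. prime p}))"
  shows "((\<lambda>p. rho2 v p) \<longlongrightarrow> L) (inf sequentially (principal {p. prime p}))"
proof -
  let ?F = "inf sequentially (principal {p::nat. prime p})"
  have ev: "eventually (\<lambda>p. rho v p \<le> rho2 v p \<and> rho2 v p \<le> rho v p + 4 / real p) ?F"
    unfolding eventually_inf_principal
    using eventually_gt_at_top[of "2::nat"]
    by (rule eventually_mono) (use rho_bounds assms(1,2) in auto)
  have z: "((\<lambda>p::nat. 4 / real p) \<longlongrightarrow> 0) ?F"
    by (rule tendsto_mono[OF inf_le1 lim_const_over_n])
  have up: "((\<lambda>p. rho v p + 4 / real p) \<longlongrightarrow> L) ?F"
    using tendsto_add[OF assms(3) z] by simp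
  show ?thesis
    by (rule tendsto_sandwich[OF _ _ assms(3) up]) (use ev in \<open>auto elim: eventually_mono\<close>)
qed

end
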